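(* Let $W$ be a discrete memoryless channel with finite input alphabet $\mathcal{X}$ and finite output alphabet $\mathcal{Y}$, and let $\vartheta(\rho)$ be defined as in the context. Let $\{\bm{x}_1,\ldots,\bm{x}_M\}\subseteq\mathcal{X}^n$ be any code of block-length $n$ with $M$ codewords, and let $\bm{\Psi}_m=\bm{\psi}_{x_{m,1}}\otimes\cdots\otimes\bm{\psi}_{x_{m,n}}$ be the state vector of codeword $\bm{x}_m=(x_{m,1},\ldots,x_{m,n})$. Then for every $\rho\geq 1$, $$\max_{m}\sum_{m'\neq m}\langle\bm{\Psi}_m,\bm{\Psi}_{m'}\rangle \;\geq\; \frac{\left(M e^{-n\vartheta(\rho)}-1\right)^{\rho}}{(M-1)^{\rho-1}}.$$
   Context: $W(y|x)$, $x\in\mathcal{X}$, $y\in\mathcal{Y}$, are the transition probabilities of the channel; the channel is memoryless, so $W^{(n)}(\bm{y}|\bm{x})=\prod_{i=1}^n W(y_i|x_i)$. For each input symbol $x$, the state vector $\bm{\psi}_x\in\mathbb{R}^{|\mathcal{Y}|}$ has components $\bm{\psi}_x(y)=\sqrt{W(y|x)}$ (nonnegative square roots), so it is a unit vector and $\langle\bm{\psi}_x,\bm{\psi}_{x'}\rangle=\sum_y\sqrt{W(y|x)W(y|x')}\ge 0$; $\otimes$ is the Kronecker product, and $\langle\bm{\Psi}_m,\bm{\Psi}_{m'}\rangle=\sum_{\bm{y}\in\mathcal{Y}^n}\sqrt{W^{(n)}(\bm{y}|\bm{x}_m)W^{(n)}(\bm{y}|\bm{x}_{m'})}$. For $\rho\ge1$,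 an orthonormal representation of degree $\rho$ is a family $\{\tilde{\bm{\psi}}_x\}_{x\in\mathcal{X}}$ of unit-norm vectors in some (complex) Hilbert space such that $|\langle\tilde{\bm{\psi}}_x,\tilde{\bm{\psi}}_{x'}\rangle|\le(\langle\bm{\psi}_x,\bm{\psi}_{x'}\rangle)^{1/\rho}$ for all $x,x'$; $\Gamma(\rho)$ denotes the set of all such representations. The value of a representation is $V(\{\tilde{\bm{\psi}}_x\})=\min_{\bm{f}}\max_x\log\frac{1}{|\langle\tilde{\bm{\psi}}_x,\bm{f}\rangle|^2}$, the minimum over unit-norm vectors $\bm{f}$ in the same space, and $\vartheta(\rho)=\min_{\{\tilde{\bm{\psi}}_x\}\in\Gamma(\rho)}V(\{\tilde{\bm{\psi}}_x\})$. Logarithms are natural. *)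

theory Defs
  imports "HOL-Analysis.Analysis"
begin

text \<open>Discrete memoryless channel: W x y = W(y|x).\<close>
definition dmc :: "('x::finite \<Rightarrow> 'y::finite \<Rightarrow> real) \<Rightarrow> bool" where
  "dmc W \<longleftrightarrow> (\<forall>x y. 0 \<le> W x y) \<and> (\<forall>x. (\<Sum>y\<in>UNIV. W x y) = 1)"

text \<open>Inner product of the state vectors psi_x, psi_x' (components sqrt W(y|x)).\<close>
definition psi_inner :: "('x \<Rightarrow> 'y::finite \<Rightarrow> real) \<Rightarrow> 'x \<Rightarrow> 'x \<Rightarrow> real" where
  "psi_inner W x x' = (\<Sum>y\<in>UNIV. sqrt (W x y) * sqrt (W x' y))"

definition cinner :: "complex^'d::finite \<Rightarrow> complex^'d \<Rightarrow> complex" where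
  "cinner u v = (\<Sum>i\<in>UNIV. cnj (u $ i) * v $ i)"

definition Gamma :: "('x::finite \<Rightarrow> 'y::finite \<Rightarrow> real) \<Rightarrow> real \<Rightarrow> ('x \<Rightarrow> complex^'d::finite) set" where
  "Gamma W \<rho> = {\<phi>. (\<forall>x. norm (\<phi> x) = 1) \<and>
      (\<forall>x x'. cmod (cinner (\<phi> x) (\<phi> x')) \<le> (psi_inner W x x') powr (1 / \<rho>))}"

definition logterm :: "complex^'d::finite \<Rightarrow> complex^'d \<Rightarrow> ereal" where
  "logterm u f = (if cinner u f = 0 then \<infinity> else ereal (ln (1 / (cmod (cinner u f))\<^sup>2)))"

definition rep_value :: "('x::finite \<Rightarrow> complex^'d::finite) \<Rightarrow> ereal" where
  "rep_value \<phi> = (INF f\<in>{f. norm f = 1}. SUP x\<in>UNIV. logterm (\<phi> x) f)"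

definition theta :: "('x::finite \<Rightarrow> 'y::finite \<Rightarrow> real) \<Rightarrow> real \<Rightarrow> 'd::finite itself \<Rightarrow> ereal" where
  "theta W \<rho> _ = (INF \<phi>\<in>(Gamma W \<rho> :: ('x \<Rightarrow> complex^'d) set). rep_value \<phi>)"

definition exp_neg :: "ereal \<Rightarrow> real" where
  "exp_neg t = (if t = \<infinity> then 0 else exp (- real_of_ereal t))"

definition codeword_inner :: "('x \<Rightarrow> 'y::finite \<Rightarrow> real) \<Rightarrow> nat \<Rightarrow> (nat \<Rightarrow> 'x) \<Rightarrow> (nat \<Rightarrow> 'x) \<Rightarrow> real" where
  "codeword_inner W n u v = (\<Sum>y\<in>(PiE {..<n} (\<lambda>_. UNIV)).
      sqrt ((\<Prod>i<n. W (u i) (y i)) * (\<Prod>i<n. W (v i) (y i))))"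

end

theory Submission
  imports Defs
begin

lemma sum_PiE_prod:
  fixes h :: "nat \<Rightarrow> 'd::finite \<Rightarrow> 'c::comm_semiring_1"
  shows "(\<Sum>i\<in>PiE {..<n} (\<lambda>_. UNIV). \<Prod>k<n. h k (i k)) = (\<Prod>k<n. \<Sum>y\<in>UNIV. h k y)"
  by (rule prod_sum_PiE[symmetric]) auto

lemma real_sqrt_prod: "sqrt (prod f A) = (\<Prod>x\<in>A. sqrt (f x))"
  by (induction A rule: infinite_finite_induct) (auto simp: real_sqrt_mult)

lemma codeword_inner_prod:
  assumes "dmc W"
  shows "codeword_inner W n u v = (\<Prod>k<n. psi_inner W (u k) (v k))"
proof -
  have nn: "\<And>x y. 0 \<le> W x y" using assms by (simp add: dmc_def)
  have "codeword_inner W n u v = (\<Sum>i\<in>PiE {..<n} (\<lambda>_. UNIV). \<Prod>k<n. sqrt (W (u k) (i k)) * sqrt (W (v k) (i k)))"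
    unfolding codeword_inner_def
    by (intro sum.cong refl) (simp add: real_sqrt_mult prod.distrib[symmetric] real_sqrt_prod)
  also have "\<dots> = (\<Prod>k<n. psi_inner W (u k) (v k))"
    unfolding psi_inner_def by (rule sum_PiE_prod)
  finally show ?thesis .
qed

lemma psi_inner_nonneg: "dmc W \<Longrightarrow> 0 \<le> psi_inner W x x'"
  unfolding psi_inner_def dmc_def by (intro sum_nonneg) simp

lemma psi_inner_self: "dmc W \<Longrightarrow> psi_inner W x x = 1"
  unfolding psi_inner_def dmc_def by simp

lemma psi_inner_sym: "psi_inner W x x' = psi_inner W x' x"
  unfolding psi_inner_def by (simp add: mult.commute)

lemma bern:
  fixes \<rho> u :: real assumes "\<rho> \<ge> 1" "u \<ge> 0"
  shows "1 + \<rho> * (u - 1) \<le> u powr \<rho>"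
proof (cases "u = 0")
  case True then show ?thesis using assms by simp
next
  case False
  then have u: "u > 0" using assms by simp
  have "\<rho> * 1 powr (\<rho> - 1) * (u - 1) \<le> u powr \<rho> - 1 powr \<rho>"
    using u assms
    by (intro convex_on_imp_above_tangent[where A = "{0<..}"] powr_convex)
       (auto intro!: derivative_eq_intros simp: interior_open)
  then show ?thesis by simp
qed

lemma power_sum_le:
  fixes t :: "'a \<Rightarrow> real" and \<rho> :: real
  assumes "finite J" "J \<noteq> {}" "\<rho> \<ge> 1" "\<And>j. j \<in> J \<Longrightarrow> t j \<ge> 0"
  shows "(\<Sum>j\<in>J. t j) powr \<rho> \<le> real (card J) powr (\<rho> - 1) * (\<Sum>j\<in>J. t j powr \<rho>)"
proof -
  define k where "k = real (card J)"
  define A where "A = (\<Sum>j\<in>J. t j)"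
  have k: "k > 0" using assms by (simp add: k_def card_gt_0_iff)
  have A0: "A \<ge> 0" unfolding A_def using assms by (simp add: sum_nonneg)
  show ?thesis
  proof (cases "A = 0")
    case True
    then show ?thesis using assms unfolding A_def by (simp add: sum_nonneg)
  next
    case False
    with A0 have Apos: "A > 0" by simp
    define a where "a = A / k"
    have a: "a > 0" using Apos k by (simp add: a_def)
    have each: "a powr \<rho> * (1 + \<rho> * (t j / a - 1)) \<le> t j powr \<rho>" if j: "j \<in> J" for j
    proof -
      have "1 + \<rho> * (t j / a - 1) \<le> (t j / a) powr \<rho>"
        using bern[of \<rho> "t j / a"] assms j a by simp
      also have "\<dots> = t j powr \<rho> / a powr \<rho>" using assms j a by (simp add: powr_divide)
      finally show ?thesis using a by (simp add: field_simps)
    qed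
    have "(\<Sum>j\<in>J. a powr \<rho> * (1 + \<rho> * (t j / a - 1))) = a powr \<rho> * (k + \<rho> * (A / a - k))"
      by (simp add: sum_distrib_left[symmetric] sum.distrib sum_subtractf k_def A_def sum_divide_distrib[symmetric] algebra_simps sum_distrib_right[symmetric])
    also have "A / a = k" using Apos k by (simp add: a_def)
    finally have "a powr \<rho> * k \<le> (\<Sum>j\<in>J. t j powr \<rho>)"
      using sum_mono[of J "\<lambda>j. a powr \<rho> * (1 + \<rho> * (t j / a - 1))" "\<lambda>j. t j powr \<rho>", OF each] by simp
    moreover have "A powr \<rho> = k powr (\<rho> - 1) * (a powr \<rho> * k)"
    proof -
      have "k powr (\<rho> - 1) * k = k powr \<rho>" using k by (simp add: powr_diff)
      moreover have "a powr \<rho> = A powr \<rho> / k powr \<rho>" using A0 k by (simp add: a_def powr_divide)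
      moreover have "k powr \<rho> > 0" using k by simp
      moreover have "k powr (\<rho>-1) * (a powr \<rho> * k) = a powr \<rho> * (k powr (\<rho>-1) * k)"
        by (simp add: algebra_simps)
      ultimately show ?thesis by simp
    qed
    ultimately show ?thesis using k unfolding A_def k_def[symmetric]
      by (metis mult_left_mono powr_ge_zero)
  qed
qed

lemma codeword_inner_nonneg: "dmc W \<Longrightarrow> 0 \<le> codeword_inner W n u v"
  by (simp add: codeword_inner_prod psi_inner_nonneg prod_nonneg)

lemma codeword_inner_self: "dmc W \<Longrightarrow> codeword_inner W n u u = 1"
  by (simp add: codeword_inner_prod psi_inner_self)

lemma codeword_inner_sym: "dmc W \<Longrightarrow> codeword_inner W n u v = codeword_inner W n v u"
  by (simp add: codeword_inner_prod psi_inner_sym)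

lemma norm_vec_sq: "(\<Sum>y\<in>UNIV. (cmod (f $ y))\<^sup>2) = (norm (f :: complex^'d::finite))\<^sup>2"
  unfolding norm_vec_def L2_set_def by (simp add: sum_nonneg)

lemma core:
  fixes W :: "'x::finite \<Rightarrow> 'y::finite \<Rightarrow> real" and c :: "nat \<Rightarrow> nat \<Rightarrow> 'x"
    and \<phi> :: "'x \<Rightarrow> complex^'d::finite" and f :: "complex^'d" and v \<rho> :: real and M n :: nat
  assumes dmc: "dmc W" and M: "M > 1" and \<rho>: "\<rho> \<ge> 1" and \<phi>: "\<phi> \<in> Gamma W \<rho>" and f: "norm f = 1"
    and lb: "\<And>x. exp (-v) \<le> (cmod (cinner (\<phi> x) f))\<^sup>2"
  shows "real M * exp (- real n * v) - 1 \<le> ((real M - 1) powr (\<rho>-1) *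
     Max ((\<lambda>m. \<Sum>m'\<in>{..<M} - {m}. codeword_inner W n (c m) (c m')) ` {..<M})) powr (1/\<rho>)"
proof -
  define I where "I = PiE {..<n} (\<lambda>_. UNIV :: 'd set)"
  define Phi where "Phi u i = (\<Prod>k<n. (\<phi> (u k)) $ (i k))" for u :: "nat \<Rightarrow> 'x" and i :: "nat \<Rightarrow> 'd"
  define F where "F i = (\<Prod>k<n. f $ (i k))" for i :: "nat \<Rightarrow> 'd"
  define a where "a m = (\<Sum>i\<in>I. cnj (Phi (c m) i) * F i)" for m
  define C where "C m m' = codeword_inner W n (c m) (c m')" for m m'
  define g where "g m m' = C m m' powr (1/\<rho>)" for m m'
  define s where "s = (\<Sum>m<M. (cmod (a m))\<^sup>2)"
  define R where "R m = (\<Sum>m'<M. g m m')" for m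
  define Rmax where "Rmax = Max (R ` {..<M})"
  define L where "L = Max ((\<lambda>m. \<Sum>m'\<in>{..<M} - {m}. C m m') ` {..<M})"
  define V where "V i = (\<Sum>m<M. a m * Phi (c m) i)" for i
  have finI: "finite I" unfolding I_def by (simp add: finite_PiE)
  have gram: "(\<Sum>i\<in>I. cnj (Phi u i) * Phi w i) = (\<Prod>k<n. cinner (\<phi> (u k)) (\<phi> (w k)))" for u w
  proof -
    have "(\<Sum>i\<in>I. cnj (Phi u i) * Phi w i) = (\<Sum>i\<in>I. \<Prod>k<n. cnj ((\<phi> (u k)) $ (i k)) * (\<phi> (w k)) $ (i k))"
      unfolding Phi_def by (simp add: prod.distrib)
    also have "\<dots> = (\<Prod>k<n. cinner (\<phi> (u k)) (\<phi> (w k)))"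
      unfolding I_def cinner_def by (rule sum_PiE_prod)
    finally show ?thesis .
  qed
  have aprod: "a m = (\<Prod>k<n. cinner (\<phi> (c m k)) f)" for m
  proof -
    have "a m = (\<Sum>i\<in>I. \<Prod>k<n. cnj ((\<phi> (c m k)) $ (i k)) * f $ (i k))"
      unfolding a_def Phi_def F_def by (simp add: prod.distrib)
    also have "\<dots> = (\<Prod>k<n. cinner (\<phi> (c m k)) f)"
      unfolding I_def cinner_def by (rule sum_PiE_prod)
    finally show ?thesis .
  qed
  have Fnorm: "(\<Sum>i\<in>I. (cmod (F i))\<^sup>2) = 1"
  proof -
    have "(\<Sum>i\<in>I. (cmod (F i))\<^sup>2) = (\<Sum>i\<in>I. \<Prod>k<n. (cmod (f $ (i k)))\<^sup>2)"
      unfolding F_def by (simp add: prod_norm[symmetric] prod_power_distrib)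
    also have "\<dots> = (\<Prod>k<n. \<Sum>y\<in>UNIV. (cmod (f $ y))\<^sup>2)"
      unfolding I_def by (rule sum_PiE_prod)
    also have "\<dots> = 1" using f by (simp add: norm_vec_sq)
    finally show ?thesis .
  qed

  have Mpos: "M > 0" using M by simp
  have slow: "real M * exp (- real n * v) \<le> s"
  proof -
    have "exp (- real n * v) \<le> (cmod (a m))\<^sup>2" for m
    proof -
      have "exp (- real n * v) = (\<Prod>k<n. exp (-v))" by (simp add: exp_of_nat_mult[symmetric])
      also have "\<dots> \<le> (\<Prod>k<n. (cmod (cinner (\<phi> (c m k)) f))\<^sup>2)"
        by (intro prod_mono) (simp add: lb)
      also have "\<dots> = (cmod (a m))\<^sup>2" by (simp add: aprod prod_norm[symmetric] prod_power_distrib)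
      finally show ?thesis .
    qed
    then have "(\<Sum>m<M. exp (- real n * v)) \<le> s" unfolding s_def by (intro sum_mono) auto
    then show ?thesis by simp
  qed
  have Cnn: "0 \<le> C m m'" for m m' using dmc by (simp add: C_def codeword_inner_nonneg)
  have gnn: "0 \<le> g m m'" for m m' by (simp add: g_def)
  have gsym: "g m m' = g m' m" for m m' using dmc by (simp add: g_def C_def codeword_inner_sym)
  have gself: "g m m = 1" for m using dmc by (simp add: g_def C_def codeword_inner_self)
  have gbound: "cmod (\<Sum>i\<in>I. cnj (Phi (c m) i) * Phi (c m') i) \<le> g m m'" for m m'
  proof -
    have "cmod (\<Sum>i\<in>I. cnj (Phi (c m) i) * Phi (c m') i) = (\<Prod>k<n. cmod (cinner (\<phi> (c m k)) (\<phi> (c m' k))))"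
      by (simp add: gram prod_norm)
    also have "\<dots> \<le> (\<Prod>k<n. psi_inner W (c m k) (c m' k) powr (1/\<rho>))"
      using \<phi> by (intro prod_mono) (simp add: Gamma_def)
    also have "\<dots> = g m m'" by (simp add: g_def C_def codeword_inner_prod[OF dmc] prod_powr_distrib)
    finally show ?thesis .
  qed
  have s_eq: "complex_of_real s = (\<Sum>i\<in>I. V i * cnj (F i))"
  proof -
    have "(\<Sum>i\<in>I. V i * cnj (F i)) = (\<Sum>m<M. a m * (\<Sum>i\<in>I. Phi (c m) i * cnj (F i)))"
      unfolding V_def by (simp add: sum_distrib_right sum_distrib_left mult.assoc sum.swap[of _ I])
    also have "\<dots> = (\<Sum>m<M. a m * cnj (a m))" unfolding a_def by simp
    also have "\<dots> = complex_of_real s" unfolding s_def of_real_sum by (intro sum.cong refl) (simp only: complex_norm_square)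
    finally show ?thesis by simp
  qed
  have s_nn: "0 \<le> s" unfolding s_def by (simp add: sum_nonneg)
  have s_le: "s\<^sup>2 \<le> (\<Sum>i\<in>I. (cmod (V i))\<^sup>2)"
  proof -
    have "s = cmod (complex_of_real s)" using s_nn by simp
    also have "\<dots> \<le> (\<Sum>i\<in>I. cmod (V i) * cmod (F i))"
      unfolding s_eq by (rule order_trans[OF norm_sum]) (simp add: norm_mult)
    also have "\<dots> \<le> L2_set (\<lambda>i. cmod (V i)) I * L2_set (\<lambda>i. cmod (F i)) I"
      using L2_set_mult_ineq[of "\<lambda>i. cmod (V i)" "\<lambda>i. cmod (F i)" I] by simp
    also have "L2_set (\<lambda>i. cmod (F i)) I = 1" unfolding L2_set_def Fnorm by simp
    finally have "s \<le> L2_set (\<lambda>i. cmod (V i)) I" by simp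
    then have "s\<^sup>2 \<le> (L2_set (\<lambda>i. cmod (V i)) I)\<^sup>2" using s_nn by (simp add: power_mono)
    also have "\<dots> = (\<Sum>i\<in>I. (cmod (V i))\<^sup>2)" unfolding L2_set_def by (simp add: sum_nonneg)
    finally show ?thesis .
  qed

  define x where "x m = cmod (a m)" for m
  have vv: "complex_of_real (\<Sum>i\<in>I. (cmod (V i))\<^sup>2) =
     (\<Sum>m<M. \<Sum>m'<M. a m * cnj (a m') * (\<Sum>i\<in>I. cnj (Phi (c m') i) * Phi (c m) i))"
  proof -
    have "complex_of_real (\<Sum>i\<in>I. (cmod (V i))\<^sup>2) = (\<Sum>i\<in>I. V i * cnj (V i))"
      unfolding of_real_sum by (intro sum.cong refl) (simp only: complex_norm_square)
    also have "\<dots> = (\<Sum>i\<in>I. \<Sum>m<M. \<Sum>m'<M. (a m * Phi (c m) i) * (cnj (a m') * cnj (Phi (c m') i)))"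
      unfolding V_def by (simp add: sum_product)
    also have "\<dots> = (\<Sum>m<M. \<Sum>i\<in>I. \<Sum>m'<M. (a m * Phi (c m) i) * (cnj (a m') * cnj (Phi (c m') i)))"
      by (rule sum.swap)
    also have "\<dots> = (\<Sum>m<M. \<Sum>m'<M. \<Sum>i\<in>I. (a m * Phi (c m) i) * (cnj (a m') * cnj (Phi (c m') i)))"
      by (intro sum.cong refl) (rule sum.swap)
    also have "\<dots> = (\<Sum>m<M. \<Sum>m'<M. a m * cnj (a m') * (\<Sum>i\<in>I. cnj (Phi (c m') i) * Phi (c m) i))"
      by (intro sum.cong refl) (simp add: sum_distrib_left algebra_simps)
    finally show ?thesis .
  qed
  have Vb: "(\<Sum>i\<in>I. (cmod (V i))\<^sup>2) \<le> (\<Sum>m<M. \<Sum>m'<M. x m * x m' * g m m')"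
  proof -
    have "(\<Sum>i\<in>I. (cmod (V i))\<^sup>2) = cmod (complex_of_real (\<Sum>i\<in>I. (cmod (V i))\<^sup>2))"
      by (simp only: norm_of_real) (simp add: sum_nonneg)
    also have "\<dots> \<le> (\<Sum>m<M. cmod (\<Sum>m'<M. a m * cnj (a m') * (\<Sum>i\<in>I. cnj (Phi (c m') i) * Phi (c m) i)))"
      unfolding vv by (rule norm_sum)
    also have "\<dots> \<le> (\<Sum>m<M. \<Sum>m'<M. x m * x m' * g m m')"
    proof (intro sum_mono)
      fix m assume "m \<in> {..<M}"
      have "cmod (\<Sum>m'<M. a m * cnj (a m') * (\<Sum>i\<in>I. cnj (Phi (c m') i) * Phi (c m) i))
          \<le> (\<Sum>m'<M. cmod (a m * cnj (a m') * (\<Sum>i\<in>I. cnj (Phi (c m') i) * Phi (c m) i)))"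
        by (rule norm_sum)
      also have "\<dots> \<le> (\<Sum>m'<M. x m * x m' * g m m')"
      proof (intro sum_mono)
        fix m' assume "m' \<in> {..<M}"
        have "cmod (\<Sum>i\<in>I. cnj (Phi (c m') i) * Phi (c m) i) \<le> g m m'"
          using gbound[of m' m] gsym by simp
        then show "cmod (a m * cnj (a m') * (\<Sum>i\<in>I. cnj (Phi (c m') i) * Phi (c m) i)) \<le> x m * x m' * g m m'"
          unfolding x_def by (simp add: norm_mult mult_left_mono)
      qed
      finally show "cmod (\<Sum>m'<M. a m * cnj (a m') * (\<Sum>i\<in>I. cnj (Phi (c m') i) * Phi (c m) i))
          \<le> (\<Sum>m'<M. x m * x m' * g m m')" .
    qed
    finally show ?thesis .
  qed
  have xnn: "0 \<le> x m" for m by (simp add: x_def)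
  have Rnn: "0 \<le> R m" for m unfolding R_def by (simp add: sum_nonneg gnn)
  have Rmax_ge: "R m \<le> Rmax" if "m < M" for m unfolding Rmax_def using that by simp
  have amgm: "(\<Sum>m<M. \<Sum>m'<M. x m * x m' * g m m') \<le> (\<Sum>m<M. (x m)\<^sup>2 * R m)"
  proof -
    have "(\<Sum>m<M. \<Sum>m'<M. x m * x m' * g m m') \<le> (\<Sum>m<M. \<Sum>m'<M. ((x m)\<^sup>2 * g m m' + (x m')\<^sup>2 * g m m') / 2)"
    proof (intro sum_mono)
      fix m m'
      have "2 * (x m * x m') \<le> (x m)\<^sup>2 + (x m')\<^sup>2" using sum_squares_bound[of "x m" "x m'"] by (simp add: mult.assoc)
      then have "2 * (x m * x m') * g m m' \<le> ((x m)\<^sup>2 + (x m')\<^sup>2) * g m m'"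
        using gnn by (intro mult_right_mono) auto
      then show "x m * x m' * g m m' \<le> ((x m)\<^sup>2 * g m m' + (x m')\<^sup>2 * g m m') / 2"
        by (simp add: algebra_simps)
    qed
    also have "\<dots> = ((\<Sum>m<M. \<Sum>m'<M. (x m)\<^sup>2 * g m m') + (\<Sum>m<M. \<Sum>m'<M. (x m')\<^sup>2 * g m m')) / 2"
      by (simp add: sum.distrib sum_divide_distrib[symmetric])
    also have "(\<Sum>m<M. \<Sum>m'<M. (x m')\<^sup>2 * g m m') = (\<Sum>m<M. \<Sum>m'<M. (x m)\<^sup>2 * g m m')"
      by (subst sum.swap) (simp add: gsym)
    also have "(\<Sum>m<M. \<Sum>m'<M. (x m)\<^sup>2 * g m m') = (\<Sum>m<M. (x m)\<^sup>2 * R m)"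
      by (simp add: R_def sum_distrib_left)
    finally show ?thesis by simp
  qed
  have sR: "s \<le> Rmax"
  proof -
    have "(\<Sum>m<M. (x m)\<^sup>2 * R m) \<le> (\<Sum>m<M. (x m)\<^sup>2 * Rmax)"
      by (intro sum_mono mult_left_mono) (auto simp: Rmax_ge)
    also have "\<dots> = s * Rmax" by (simp add: s_def x_def sum_distrib_right)
    finally have "s\<^sup>2 \<le> s * Rmax" using s_le Vb amgm by linarith
    moreover have "0 \<le> Rmax" using Rnn Rmax_ge[of 0] Mpos by (meson order_trans)
    ultimately show ?thesis using s_nn by (cases "s = 0") (auto simp: power2_eq_square)
  qed

  obtain m0 where m0: "m0 < M" "Rmax = R m0"
  proof -
    have "Rmax \<in> R ` {..<M}" unfolding Rmax_def using Mpos by (intro Max_in) auto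
    then show ?thesis using that by auto
  qed
  define J where "J = {..<M} - {m0}"
  have finJ: "finite J" and cardJn: "card J = M - 1"
    using m0 M unfolding J_def by (auto simp: card_Diff_singleton)
  have J_ne: "J \<noteq> {}" using cardJn M by (metis card.empty less_numeral_extra(3) zero_less_diff)
  have cardJ: "real (card J) = real M - 1" using cardJn M by (simp add: of_nat_diff)
  have R0: "R m0 = 1 + (\<Sum>m'\<in>J. g m0 m')"
    unfolding R_def J_def using m0 by (simp add: sum.remove[of "{..<M}" m0] gself)
  have Jsum: "(\<Sum>m'\<in>J. g m0 m') \<le> ((real M - 1) powr (\<rho>-1) * L) powr (1/\<rho>)"
  proof -
    have "(\<Sum>m'\<in>J. g m0 m') powr \<rho> \<le> real (card J) powr (\<rho>-1) * (\<Sum>m'\<in>J. g m0 m' powr \<rho>)"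
      using finJ J_ne \<rho> gnn by (intro power_sum_le) auto
    also have "(\<Sum>m'\<in>J. g m0 m' powr \<rho>) = (\<Sum>m'\<in>J. C m0 m')"
      using \<rho> Cnn by (intro sum.cong refl) (simp add: g_def powr_powr)
    also have "(\<Sum>m'\<in>J. C m0 m') \<le> L"
      unfolding L_def J_def using m0 by (intro Max_ge) auto
    finally have "(\<Sum>m'\<in>J. g m0 m') powr \<rho> \<le> (real M - 1) powr (\<rho>-1) * L"
      using cardJ by (simp add: mult_left_mono)
    then have "((\<Sum>m'\<in>J. g m0 m') powr \<rho>) powr (1/\<rho>) \<le> ((real M - 1) powr (\<rho>-1) * L) powr (1/\<rho>)"
      using \<rho> by (intro powr_mono2) auto
    moreover have "((\<Sum>m'\<in>J. g m0 m') powr \<rho>) powr (1/\<rho>) = (\<Sum>m'\<in>J. g m0 m')"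
      using \<rho> gnn by (simp add: powr_powr sum_nonneg)
    ultimately show ?thesis by simp
  qed
  have LL: "L = Max ((\<lambda>m. \<Sum>m'\<in>{..<M} - {m}. codeword_inner W n (c m) (c m')) ` {..<M})"
    unfolding L_def C_def by simp
  show ?thesis using slow sR m0 R0 Jsum unfolding LL[symmetric] by linarith

qed

lemma extract_rep:
  fixes W :: "'x::finite \<Rightarrow> 'y::finite \<Rightarrow> real"
  assumes "theta W \<rho> TYPE('d::finite) < ereal v"
  shows "\<exists>(\<phi> :: 'x \<Rightarrow> complex^'d). \<phi> \<in> Gamma W \<rho> \<and> (\<exists>f. norm f = 1 \<and>
           (\<forall>x. exp (-v) \<le> (cmod (cinner (\<phi> x) f))\<^sup>2))"
proof -
  from assms obtain \<phi> :: "'x \<Rightarrow> complex^'d" where \<phi>: "\<phi> \<in> Gamma W \<rho>" "rep_value \<phi> < ereal v"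
    unfolding theta_def by (auto simp: INF_less_iff)
  then obtain f where f: "norm f = 1" "(SUP x. logterm (\<phi> x) f) < ereal v"
    unfolding rep_value_def by (auto simp: INF_less_iff)
  have "exp (-v) \<le> (cmod (cinner (\<phi> x) f))\<^sup>2" for x
  proof -
    have "logterm (\<phi> x) f < ereal v"
      using f(2) by (meson UNIV_I SUP_upper le_less_trans)
    then have nz: "cinner (\<phi> x) f \<noteq> 0" and lt: "ln (1 / (cmod (cinner (\<phi> x) f))\<^sup>2) < v"
      unfolding logterm_def by (auto split: if_splits)
    define q where "q = (cmod (cinner (\<phi> x) f))\<^sup>2"
    have q: "q > 0" using nz by (simp add: q_def)
    have "- ln q < v" using lt q by (simp add: q_def ln_div)
    then have "exp (-v) < exp (ln q)" by simp
    also have "exp (ln q) = q" using q by simp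
    finally show ?thesis unfolding q_def by simp
  qed
  then show ?thesis using \<phi> f by blast
qed

theorem theorem1:
  fixes W :: "'x::finite \<Rightarrow> 'y::finite \<Rightarrow> real"
    and c :: "nat \<Rightarrow> nat \<Rightarrow> 'x"
    and n M :: nat and \<rho> :: real
  assumes "dmc W" and "M \<ge> 1" and "\<rho> \<ge> 1"
  shows "(Max ((\<lambda>m. \<Sum>m'\<in>{..<M} - {m}. codeword_inner W n (c m) (c m')) ` {..<M}))
    \<ge> (max 0 (real M * exp_neg (ereal (real n) * theta W \<rho> TYPE('d::finite)) - 1)) powr \<rho>
       / (real M - 1) powr (\<rho> - 1)"
proof -
  define L where "L = Max ((\<lambda>m. \<Sum>m'\<in>{..<M} - {m}. codeword_inner W n (c m) (c m')) ` {..<M})"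
  define \<theta> where "\<theta> = theta W \<rho> TYPE('d::finite)"
  define t0 where "t0 = exp_neg (ereal (real n) * \<theta>)"
  have L0: "(\<Sum>m'\<in>{..<M} - {0}. codeword_inner W n (c 0) (c m')) \<le> L"
    unfolding L_def using assms(2) by (intro Max_ge) auto
  have Lnn: "0 \<le> L"
    using L0 by (meson order_trans sum_nonneg codeword_inner_nonneg[OF assms(1)])
  show ?thesis
  proof (cases "M = 1")
    case True
    have "(real M - 1) powr (\<rho> - 1) = 0" using True by simp
    then show ?thesis using Lnn unfolding L_def by simp
  next
    case False
    then have M: "M > 1" using assms by simp
    define B where "B = ((real M - 1) powr (\<rho>-1) * L) powr (1/\<rho>)"
    have Bnn: "0 \<le> B" by (simp add: B_def)
    have coreB: "real M * exp (- real n * v) - 1 \<le> B" if "\<theta> < ereal v" for v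
    proof -
      from extract_rep[OF that[unfolded \<theta>_def]] obtain \<phi> :: "'x \<Rightarrow> complex^'d" and f where
        "\<phi> \<in> Gamma W \<rho>" "norm f = 1" "\<forall>x. exp (-v) \<le> (cmod (cinner (\<phi> x) f))\<^sup>2" by blast
      then show ?thesis unfolding B_def L_def using core[OF assms(1) M assms(3)] by blast
    qed
    have Q: "real M * t0 - 1 \<le> B"
    proof (cases "n = 0")
      case True
      then have t0: "t0 = 1" by (simp add: t0_def exp_neg_def zero_ereal_def[symmetric])
      have "real M - 1 \<le> L"
        using L0 True M by (simp add: codeword_inner_def card_Diff_singleton of_nat_diff)
      then have "((real M - 1) powr (\<rho>-1) * (real M - 1)) powr (1/\<rho>) \<le> B"
        unfolding B_def using M assms(3) by (intro powr_mono2 mult_left_mono) auto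
      moreover have "((real M - 1) powr (\<rho>-1) * (real M - 1)) powr (1/\<rho>) = real M - 1"
      proof -
        have "(real M - 1) powr (\<rho>-1) * (real M - 1) = (real M - 1) powr \<rho>"
          using M by (simp add: powr_diff)
        then show ?thesis using M assms(3) by (simp add: powr_powr)
      qed
      ultimately show ?thesis using t0 by simp
    next
      case False
      then have npos: "real n > 0" by simp
      show ?thesis
      proof (cases \<theta>)
        case (real r)
        show ?thesis
        proof (rule ccontr)
          assume "\<not> ?thesis"
          then have gt: "real M * exp (- (real n * r)) - 1 > B"
            using real by (simp add: t0_def exp_neg_def)
          define q where "q = (B + 1) / real M"
          have q: "q > 0" using Bnn M by (simp add: q_def)
          have "q < exp (- (real n * r))" using gt M by (simp add: q_def field_simps)
          then have lnq: "ln q < - (real n * r)" using q by (metis exp_less_cancel_iff exp_ln)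
          define v where "v = (r + (- ln q / real n)) / 2"
          have a0: "r * real n < - ln q" using lnq by (simp add: mult.commute)
          have a1: "r < - ln q / real n" using a0 npos by (subst pos_less_divide_eq) auto
          have rv: "r < v" using a1 by (simp add: v_def)
          have nv: "real n * v = (real n * r - ln q) / 2" using npos by (simp add: v_def field_simps)
          have "ln q < - real n * v" using lnq nv by simp
          then have "q < exp (- real n * v)" using q by (metis exp_less_cancel_iff exp_ln)
          then have "real M * exp (- real n * v) - 1 > B" using M by (simp add: q_def field_simps)
          moreover have "real M * exp (- real n * v) - 1 \<le> B" using coreB[of v] real rv by simp
          ultimately show False by simp
        qed
      next
        case PInf
        then have "t0 = 0" using npos by (simp add: t0_def exp_neg_def)
        then show ?thesis using Bnn by simp
      next
        case MInf
        then have "t0 = 1" using npos by (simp add: t0_def exp_neg_def)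
        moreover have "real M * exp (- real n * 0) - 1 \<le> B" using coreB[of 0] MInf by simp
        ultimately show ?thesis by simp
      qed
    qed
    have X: "max 0 (real M * t0 - 1) \<le> B" using Q Bnn by simp
    have "(max 0 (real M * t0 - 1)) powr \<rho> \<le> B powr \<rho>"
      using X assms(3) by (intro powr_mono2) auto
    also have "B powr \<rho> = (real M - 1) powr (\<rho>-1) * L"
      using assms(3) Lnn by (simp add: B_def powr_powr)
    finally have "(max 0 (real M * t0 - 1)) powr \<rho> \<le> (real M - 1) powr (\<rho>-1) * L" .
    moreover have "(real M - 1) powr (\<rho>-1) > 0" using M by simp
    ultimately show ?thesis unfolding L_def[symmetric] t0_def[symmetric] \<theta>_def[symmetric]
      by (simp add: divide_le_eq mult.commute)
  qed
qed

end
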